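(* Let $b=3$, $c>0$ and $k\in\left(0,\frac{c}{4}\right)$. Let $\phi=\phi_k\in C^\infty(\mathbb{R})$ be the solitary wave profile of $$u_t-u_{txx}+4uu_x=3u_xu_{xx}+uu_{xxx},$$ that is, the travelling wave $u(t,x)=\phi(x-ct)$ with $\phi'(0)=0$, $\phi(x)\to k$ as $|x|\to\infty$ and $0<\phi<c$. Then the mapping $$k\mapsto Q(\phi)=\int_{\mathbb{R}}\left[3\frac{c-k}{c-\phi}-\left(\frac{c-k}{c-\phi}\right)^3-2\right]dx$$ is strictly increasing on $\left(0,\frac{c}{4}\right)$. *)

theory Defs
  imports "HOL-Analysis.Analysis"
begin

definition smooth_real :: "(real \<Rightarrow> real) \<Rightarrow> bool" where
  "smooth_real f \<longleftrightarrow> (\<forall>n. \<forall>x. ((deriv ^^ n) f) differentiable (at x))"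

text \<open>Travelling-wave ODE obtained from u_t - u_txx + 4 u u_x = 3 u_x u_xx + u u_xxx
  (the case b = 3) with u(t,x) = phi(x - c t).\<close>
definition tw_ode :: "real \<Rightarrow> (real \<Rightarrow> real) \<Rightarrow> bool" where
  "tw_ode c phi \<longleftrightarrow> (\<forall>x.
     - c * deriv phi x + c * (deriv ^^ 3) phi x + 4 * phi x * deriv phi x
       = 3 * deriv phi x * (deriv ^^ 2) phi x + phi x * (deriv ^^ 3) phi x)"

definition solitary_profile :: "real \<Rightarrow> real \<Rightarrow> (real \<Rightarrow> real) \<Rightarrow> bool" where
  "solitary_profile c k phi \<longleftrightarrow>
     smooth_real phi \<and> tw_ode c phi \<and> deriv phi 0 = 0 \<and>
     (phi \<longlongrightarrow> k) at_top \<and> (phi \<longlongrightarrow> k) at_bot \<and>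
     (\<forall>x. 0 < phi x \<and> phi x < c) \<and> \<not> (\<forall>x. phi x = k)"

definition Qfun :: "real \<Rightarrow> real \<Rightarrow> (real \<Rightarrow> real) \<Rightarrow> real" where
  "Qfun c k phi = (LINT x|lborel. 3 * ((c - k) / (c - phi x)) - ((c - k) / (c - phi x)) ^ 3 - 2)"

end

theory Submission
  imports Defs
begin


definition Qc :: "real \<Rightarrow> real \<Rightarrow> real" where
  "Qc c k = 4 * ln (sqrt ((c-k)*(c-4*k)) + c - 2*k) - 2 * ln c - 2 * ln k - 2 * (sqrt ((c-k)*(c-4*k)) / k)"

lemma alg_t1: fixes r c k :: real
  assumes "r + c - 2*k \<noteq> 0" "c*k \<noteq> 0" "(r + c - 2*k) * (c - 2*k - r) = c*k"
  shows "1 / (r + c - 2*k) = (c - 2*k - r) / (c*k)"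
  using assms by (simp add: field_simps)
lemma alg_t2: fixes r c k X :: real
  assumes "r \<noteq> 0" "c \<noteq> 0" "k \<noteq> 0"
  shows "4 * X * (c - 2*k - r) / (2*r*c*k) - 2 * (1/k)
        - 2 * (((8*k - 5*c) / (2*r)) * k - r * 1) / k^2
       = (2*k*X * (c - 2*k - r) - 2*r*c*k - c*((8*k-5*c)*k - 2*r^2)) / (r*c*k^2)"
  using assms by (simp add: field_simps power2_eq_square)
lemma alg_t3: fixes r c k :: real
  assumes rr: "r^2 = (c-k)*(c-4*k)"
  shows "2*k*((8*k - 5*c) - 4*r) * (c - 2*k - r) - 2*r*c*k - c*((8*k-5*c)*k - 2*r^2) = c * ((c-4*k)*(2*c+k))"
  using rr by algebra
lemma alg_t4: fixes r :: real assumes "r \<noteq> 0"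
  shows "((8*k - 5*c) / (2*r) - 2) = ((8*k - 5*c) - 4*r) / (2*r)"
  using assms by (simp add: field_simps)

lemma u1: fixes r k c :: real shows "inverse r / 2 * (8*k - 5*c) = (8*k - 5*c) / (2*r)"
  by (cases "r = 0") (simp_all add: field_simps)

lemma alg:
  fixes r c k :: real
  assumes r0: "r > 0" and rr: "r^2 = (c-k)*(c-4*k)" and k: "k > 0" and c: "c > 0" and w: "r + c - 2*k > 0"
  shows "4 * (((8*k - 5*c) / (2*r) - 2) / (r + c - 2*k)) - 0 - 2 * (1/k)
        - 2 * (((8*k - 5*c) / (2*r)) * k - r * 1) / k^2 = (c-4*k)*(2*c+k) / (r * k^2)"
proof -
  have e: "(r + c - 2*k) * (c - 2*k - r) = c*k" using rr by algebra
  have i: "1 / (r + c - 2*k) = (c - 2*k - r) / (c*k)" using alg_t1[OF _ _ e] w c k by simp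
  have "4 * (((8*k - 5*c) / (2*r) - 2) / (r + c - 2*k)) = 4 * (((8*k - 5*c) - 4*r) / (2*r)) * (1 / (r + c - 2*k))"
    using alg_t4[of r k c] r0 by simp
  also have "\<dots> = 4 * ((8*k - 5*c) - 4*r) * (c - 2*k - r) / (2*r*c*k)"
    unfolding i by simp
  finally have 1: "4 * (((8*k - 5*c) / (2*r) - 2) / (r + c - 2*k)) = 4 * ((8*k - 5*c) - 4*r) * (c - 2*k - r) / (2*r*c*k)" .
  show ?thesis unfolding 1 using alg_t2[of r c k "(8*k - 5*c) - 4*r"] alg_t3[OF rr] r0 k c by simp
qed

lemma Qc_deriv:
  assumes c: "c > 0" and k: "0 < k" "k < c/4"
  shows "DERIV (Qc c) k :> (c-4*k)*(2*c+k) / (sqrt ((c-k)*(c-4*k)) * k^2)"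
proof -
  define r where "r = sqrt ((c-k)*(c-4*k))"
  have pos: "(c-k)*(c-4*k) > 0" using assms by (intro mult_pos_pos) auto
  have r0: "r > 0" using pos r_def by simp
  have rr: "r^2 = (c-k)*(c-4*k)" using pos r_def by simp
  have w: "r + c - 2*k > 0" using r0 k by linarith
  have d1: "DERIV (\<lambda>x. (c-x)*(c-4*x)) k :> (8*k - 5*c)"
    by (auto intro!: derivative_eq_intros simp: algebra_simps)
  have dr0: "DERIV (\<lambda>x. sqrt ((c-x)*(c-4*x))) k :> inverse r / 2 * (8*k - 5*c)"
    unfolding r_def by (rule DERIV_chain2[OF _ d1]) (rule DERIV_real_sqrt[OF pos])
  have dr: "DERIV (\<lambda>x. sqrt ((c-x)*(c-4*x))) k :> (8*k - 5*c) / (2*r)"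
    using dr0 unfolding u1 .
  have d3: "DERIV (\<lambda>x. sqrt ((c-x)*(c-4*x)) + c - 2*x) k :> (8*k - 5*c) / (2*r) - 2"
    by (rule DERIV_cong[OF DERIV_diff[OF DERIV_add[OF dr DERIV_const] DERIV_cmult[OF DERIV_ident, of 2]]]) simp
  have d4: "DERIV (\<lambda>x. ln (sqrt ((c-x)*(c-4*x)) + c - 2*x)) k :> ((8*k - 5*c) / (2*r) - 2) / (r + c - 2*k)"
  proof -
    have "DERIV ln (r + c - 2*k) :> 1 / (r + c - 2*k)" using DERIV_ln_divide w by blast
    from DERIV_chain2[OF this[unfolded r_def] d3] show ?thesis unfolding r_def by simp
  qed
  have d5: "DERIV (\<lambda>x. sqrt ((c-x)*(c-4*x)) / x) k :> (((8*k - 5*c) / (2*r)) * k - r * 1) / k^2"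
    by (rule DERIV_cong[OF DERIV_divide[OF dr DERIV_ident]]) (use k in simp, simp only: power2_eq_square r_def)
  have D: "DERIV (Qc c) k :> 4 * (((8*k - 5*c) / (2*r) - 2) / (r + c - 2*k)) - 0 - 2 * (1/k)
        - 2 * (((8*k - 5*c) / (2*r)) * k - r * 1) / k^2"
    unfolding Qc_def
    by (rule DERIV_cong[OF DERIV_diff[OF DERIV_diff[OF DERIV_diff[OF DERIV_cmult[OF d4, of 4] DERIV_const[of "2 * ln c"]]
      DERIV_cmult[OF DERIV_ln_divide[OF k(1)], of 2]] DERIV_cmult[OF d5, of 2]]]) simp
  have "DERIV (Qc c) k :> (c-4*k)*(2*c+k) / (r * k^2)" using D unfolding alg[OF r0 rr k(1) c w] .
  then show ?thesis unfolding r_def .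
qed

lemma Qc_mono:
  assumes c: "c > 0" and k: "0 < k1" "k1 < k2" "k2 < c/4"
  shows "Qc c k1 < Qc c k2"
proof (rule DERIV_pos_imp_increasing[OF k(2)])
  fix x assume x: "k1 \<le> x" "x \<le> k2"
  have pos: "(c-x)*(c-4*x) > 0" using x k by (intro mult_pos_pos) auto
  show "\<exists>y. DERIV (Qc c) x :> y \<and> y > 0"
  proof (intro exI conjI)
    show "DERIV (Qc c) x :> (c-4*x)*(2*c+x) / (sqrt ((c-x)*(c-4*x)) * x^2)"
      using Qc_deriv[of c x] x k c by simp
    show "(c-4*x)*(2*c+x) / (sqrt ((c-x)*(c-4*x)) * x^2) > 0"
      using x k c pos by (intro divide_pos_pos mult_pos_pos) auto
  qed
qed




lemma lim_deriv_zero: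
  fixes f g :: "real \<Rightarrow> real"
  assumes lf: "(f \<longlongrightarrow> l) at_top" and d: "\<And>x. DERIV f x :> g x"
    and lg: "((\<lambda>x. \<bar>g x\<bar>) \<longlongrightarrow> m) at_top"
  shows "m = 0"
proof (rule ccontr)
  assume "m \<noteq> 0"
  have "m \<ge> 0" by (rule tendsto_lowerbound[OF lg]) auto
  with \<open>m \<noteq> 0\<close> have m: "m > 0" by simp
  have e1: "eventually (\<lambda>x. m/2 < \<bar>g x\<bar>) at_top" using order_tendstoD(1)[OF lg, of "m/2"] m by simp
  have e2: "eventually (\<lambda>x. dist (f x) l < m/4) at_top" using tendstoD[OF lf, of "m/4"] m by simp
  obtain X where X: "\<And>x. x \<ge> X \<Longrightarrow> m/2 < \<bar>g x\<bar> \<and> dist (f x) l < m/4"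
    using eventually_conj[OF e1 e2] unfolding eventually_at_top_linorder by blast
  obtain z where z: "X < z" "z < X + 1" "f (X+1) - f X = (X + 1 - X) * g z"
    using MVT2[of X "X+1" f g] d by auto
  have "\<bar>f (X+1) - f X\<bar> \<le> dist (f (X+1)) l + dist (f X) l"
    by (simp add: dist_real_def)
  also have "\<dots> < m/2" using X[of X] X[of "X+1"] by simp
  finally have "\<bar>g z\<bar> < m/2" using z by simp
  with X[of z] z show False by simp
qed

definition qq :: "real \<Rightarrow> real \<Rightarrow> real \<Rightarrow> real" where
  "qq c k u = (u-k)^2 - 2*(c-2*k)*(u-k) + (c-k)*(c-4*k)"

lemma attains_max_lim:
  fixes f :: "real \<Rightarrow> real"
  assumes cont: "\<And>x. isCont f x" and lt: "(f \<longlongrightarrow> l) at_top" and lb: "(f \<longlongrightarrow> l) at_bot"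
    and x0: "f x0 > l"
  shows "\<exists>M. \<forall>x. f x \<le> f M"
proof -
  obtain X1 where X1: "\<And>x. x \<ge> X1 \<Longrightarrow> f x < f x0"
    using order_tendstoD(2)[OF lt x0] unfolding eventually_at_top_linorder by blast
  obtain X2 where X2: "\<And>x. x \<le> X2 \<Longrightarrow> f x < f x0"
    using order_tendstoD(2)[OF lb x0] unfolding eventually_at_bot_linorder by blast
  let ?S = "{min X2 x0 .. max X1 x0}"
  have co: "continuous_on ?S f" using cont by (simp add: continuous_at_imp_continuous_on)
  have ne: "?S \<noteq> {}" by simp
  obtain M where M: "M \<in> ?S" "\<And>y. y \<in> ?S \<Longrightarrow> f y \<le> f M"
    using continuous_attains_sup[OF compact_Icc ne co] by blast
  have "f x \<le> f M" for x
  proof (cases "x \<in> ?S")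
    case True then show ?thesis using M by blast
  next
    case False
    have x0S: "x0 \<in> ?S" by simp
    from False have "x \<ge> X1 \<or> x \<le> X2" by auto
    then have "f x < f x0" using X1 X2 by blast
    then show ?thesis using M(2)[OF x0S] by simp
  qed
  then show ?thesis by blast
qed

lemma attains_min_lim:
  fixes f :: "real \<Rightarrow> real"
  assumes cont: "\<And>x. isCont f x" and lt: "(f \<longlongrightarrow> l) at_top" and lb: "(f \<longlongrightarrow> l) at_bot"
    and x0: "f x0 < l"
  shows "\<exists>M. \<forall>x. f M \<le> f x"
proof -
  have "\<exists>M. \<forall>x. - f x \<le> - f M"
    by (rule attains_max_lim[of "\<lambda>x. - f x" "- l" x0]) (use assms in \<open>auto intro: tendsto_minus\<close>)
  then show ?thesis by auto
qed

lemma qq_fact: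
  assumes "c > 0" "k > 0"
  shows "qq c k u = (u - (c - k - sqrt (c*k))) * (u - (c - k + sqrt (c*k)))"
proof -
  have "sqrt (c*k) ^ 2 = c * k" using assms by simp
  then show ?thesis unfolding qq_def by algebra
qed

lemma sqrt_ck_gt_k: assumes "0 < k" "k < c" shows "k < sqrt (c*k)"
proof -
  have "k*k < c*k" using assms by (intro mult_strict_right_mono) auto
  then have "sqrt (k*k) < sqrt (c*k)" by (rule real_sqrt_less_mono)
  moreover have "sqrt (k*k) = k" using assms(1) by (simp add: real_sqrt_mult_self)
  ultimately show ?thesis by simp
qed

lemma um_gt_k: assumes "0 < k" "k < c/4" shows "k < c - k - sqrt (c*k)"
proof -
  have "sqrt (c*k) < sqrt ((c - 2*k)^2)"
  proof (rule real_sqrt_less_mono)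
    have "(c-2*k)^2 - c*k = (c-k)*(c-4*k)" by algebra
    moreover have "(c-k)*(c-4*k) > 0" using assms by (intro mult_pos_pos) auto
    ultimately show "c * k < (c - 2*k)^2" by linarith
  qed
  moreover have "sqrt ((c - 2*k)^2) = c - 2*k" using assms by simp
  ultimately show ?thesis by simp
qed

lemma qq_pos_le_k: assumes "0 < k" "k < c/4" "u \<le> k" shows "qq c k u > 0"
proof -
  have "(u-k)^2 \<ge> 0" by simp
  moreover have "- 2*(c-2*k)*(u-k) \<ge> 0"
  proof -
    have "(2*(c-2*k))*(u-k) \<le> 0" using assms by (intro mult_nonneg_nonpos) auto
    then show ?thesis by (simp add: algebra_simps)
  qed
  moreover have "(c-k)*(c-4*k) > 0" using assms by (intro mult_pos_pos) auto
  ultimately show ?thesis unfolding qq_def by linarith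
qed

lemma qq_zero: assumes "0 < k" "k < c/4" "u < c" "qq c k u = 0" shows "u = c - k - sqrt (c*k)"
proof -
  have "u - (c - k + sqrt (c*k)) < 0" using sqrt_ck_gt_k[of k c] assms by simp
  then show ?thesis using assms qq_fact[of c k u] by auto
qed

lemma sq_nn: assumes "0 < k" "k < c/4" shows "0 \<le> sqrt (c*k)"
  using assms by simp

lemma qq_pos: assumes "0 < k" "k < c/4" "u < c - k - sqrt (c*k)" shows "qq c k u > 0"
proof -
  have "u - (c - k + sqrt (c*k)) < 0" using assms sq_nn[OF assms(1,2)] by linarith
  moreover have "u - (c - k - sqrt (c*k)) < 0" using assms by linarith
  ultimately show ?thesis using assms qq_fact[of c k u] by (simp add: mult_neg_neg)
qed

lemma qq_nonneg_imp: assumes "0 < k" "k < c/4" "u < c" "qq c k u \<ge> 0" shows "u \<le> c - k - sqrt (c*k)"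
proof -
  have neg: "u - (c - k + sqrt (c*k)) < 0" using sqrt_ck_gt_k[of k c] assms by simp
  show ?thesis
  proof (rule ccontr)
    assume "\<not> u \<le> c - k - sqrt (c*k)"
    then have "u - (c - k - sqrt (c*k)) > 0" by simp
    then have "(u - (c - k - sqrt (c*k))) * (u - (c - k + sqrt (c*k))) < 0" using neg by (rule mult_pos_neg)
    then show False using assms qq_fact[of c k u] by simp
  qed
qed

lemma halfmono:
  fixes f f1 f2 :: "real \<Rightarrow> real"
  assumes H1: "\<And>x. DERIV f x :> f1 x" and H2: "\<And>x. DERIV f1 x :> f2 x"
    and H3: "\<And>x. f x \<le> u" and H4: "f M = u" and H5: "\<And>x. f1 x = 0 \<Longrightarrow> f x = u"
    and H6: "f2 M < 0" and H7: "f1 M = 0"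
  shows "\<And>x. x > M \<Longrightarrow> f1 x < 0 \<and> f x < u"
proof -
  have cf: "continuous_on S f" for S using H1 by (meson DERIV_isCont continuous_at_imp_continuous_on)
  have cf1: "continuous_on S f1" for S using H2 by (meson DERIV_isCont continuous_at_imp_continuous_on)
  obtain d where d: "d > 0" "\<And>h. h > 0 \<Longrightarrow> h < d \<Longrightarrow> f1 (M + h) < 0"
    using DERIV_neg_dec_right[OF H2 H6] H7 by auto
  have near: "f1 p < 0 \<and> f p < u" if p: "M < p" "p < M + d" for p
  proof
    show "f1 p < 0" using d(2)[of "p - M"] p by simp
    obtain z where z: "M < z" "z < p" "f p - f M = (p - M) * f1 z"
      using MVT2[of M p f f1] H1 p by auto
    have "f1 z < 0" using d(2)[of "z - M"] z p by simp
    then have "(p - M) * f1 z < 0" using p by (simp add: mult_pos_neg)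
    then show "f p < u" using z H4 by simp
  qed
  have lt: "f x < u" if x: "x > M" for x
  proof (rule ccontr)
    assume "\<not> f x < u"
    then have fx: "f x = u" using H3[of x] by simp
    have "M < min (M + d) x" using d(1) x by simp
    then obtain p where p0: "M < p" "p < min (M + d) x" using dense by blast
    have p1: "M < p" using p0 by simp
    have p2: "p < M + d" using p0 by simp
    have p3: "p < x" using p0 by simp
    note p = p1 p2 p3
    have ne: "{M..x} \<noteq> {}" using x by simp
    obtain y where y: "y \<in> {M..x}" "\<And>z. z \<in> {M..x} \<Longrightarrow> f y \<le> f z"
      using continuous_attains_inf[OF compact_Icc ne cf] by blast
    have "f y \<le> f p" using y(2)[of p] p by simp
    also have "\<dots> < u" using near[OF p(1,2)] by simp
    finally have fy: "f y < u" .
    then have "y \<noteq> M" "y \<noteq> x" using H4 fx by auto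
    then have yi: "M < y" "y < x" using y(1) by auto
    have "f1 y = 0"
    proof (rule DERIV_local_min[OF H1, of "min (y - M) (x - y)"])
      show "0 < min (y - M) (x - y)" using yi by simp
      show "\<forall>z. \<bar>y - z\<bar> < min (y - M) (x - y) \<longrightarrow> f y \<le> f z"
        using y(2) by (auto simp: abs_if split: if_splits)
    qed
    then have "f y = u" by (rule H5)
    then show False using fy by simp
  qed
  have "f1 x < 0" if x: "x > M" for x
  proof (rule ccontr)
    assume "\<not> f1 x < 0"
    then have "f1 x \<ge> 0" by simp
    have "M < min (M + d) x" using d(1) x by simp
    then obtain p where p0: "M < p" "p < min (M + d) x" using dense by blast
    have p1: "M < p" using p0 by simp
    have p2: "p < M + d" using p0 by simp
    have p3: "p \<le> x" using p0 by simp
    note p = p1 p2 p3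
    have "f1 p < 0" using near[OF p(1,2)] by simp
    then obtain z where z: "p \<le> z" "z \<le> x" "f1 z = 0"
      using IVT'[of f1 p 0 x] p(3) \<open>f1 x \<ge> 0\<close> cf1 by auto
    have "f z = u" using H5[OF z(3)] .
    moreover have "f z < u" using lt[of z] z p by simp
    ultimately show False by simp
  qed
  then show "\<And>x. x > M \<Longrightarrow> f1 x < 0 \<and> f x < u" using lt by blast
qed



definition Ft :: "real \<Rightarrow> real \<Rightarrow> real \<Rightarrow> real" where
  "Ft c k u = (c-k) * sqrt (qq c k u) / (k * (c-u)) - 2 * ln (2 * sqrt (qq c k u) + 2 * (c-u) - 2*k)"

definition Fd :: "real \<Rightarrow> real \<Rightarrow> real \<Rightarrow> real" where
  "Fd c k u = - (u-k) * ((c-k)/(c-u) + 2) / ((c-u) * sqrt (qq c k u))"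

lemma Ft_alg:
  fixes s u c k :: real
  assumes s: "s \<noteq> 0" and ss: "s^2 = (u-k)^2 - 2*(c-2*k)*(u-k) + (c-k)*(c-4*k)"
    and v: "c - u \<noteq> 0" and k: "k \<noteq> 0" and L: "s + (c - u) - k \<noteq> 0"
  shows "(c-k) * (((u - k - (c - 2*k)) / s) * (c - u) + s) / (k * (c-u)^2)
         - 2 * ((u - k - (c - 2*k)) / s - 1) / (s + (c - u) - k)
       = - (u-k) * ((c-k)/(c-u) + 2) / ((c-u) * s)"
proof -
  define a where "a = u - k - (c - 2*k)"
  define w where "w = c - u"
  define l where "l = s + w - k"
  have w0: "w \<noteq> 0" and l0: "l \<noteq> 0" using v L unfolding w_def l_def by auto
  define N where "N = k * w^2 * s * l"
  have N0: "N \<noteq> 0" unfolding N_def using s w0 l0 k by simp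
  have t1: "(c-k) * ((a / s) * w + s) / (k * w^2) * N = (c-k)*(a*w + s^2)*l"
    unfolding N_def using s w0 k by (simp add: field_simps power2_eq_square)
  have t2: "2 * (a / s - 1) / l * N = 2*k*w^2*(a - s)"
    unfolding N_def using s l0 by (simp add: field_simps power2_eq_square)
  have t3: "- (u-k) * ((c-k)/w + 2) / (w * s) * N = - (u-k)*((c-k) + 2*w)*k*l"
    unfolding N_def using s w0 by (simp add: field_simps power2_eq_square)
  have p: "(c-k)*(a*w + s^2)*l - 2*k*w^2*(a - s) = - (u-k)*((c-k) + 2*w)*k*l"
    unfolding a_def w_def l_def using ss by algebra
  have "((c-k) * ((a / s) * w + s) / (k * w^2) - 2 * (a / s - 1) / l) * N
      = (c-k) * ((a / s) * w + s) / (k * w^2) * N - 2 * (a / s - 1) / l * N"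
    by (rule left_diff_distrib)
  also have "\<dots> = (- (u-k) * ((c-k)/w + 2) / (w * s)) * N"
    unfolding t1 t2 t3 p ..
  finally have "((c-k) * ((a / s) * w + s) / (k * w^2) - 2 * (a / s - 1) / l) * N
      = (- (u-k) * ((c-k)/w + 2) / (w * s)) * N" .
  then have "(c-k) * ((a / s) * w + s) / (k * w^2) - 2 * (a / s - 1) / l
      = - (u-k) * ((c-k)/w + 2) / (w * s)" using mult_right_cancel[OF N0] by blast
  then show ?thesis unfolding a_def w_def l_def .
qed

lemma Ft_piece1:
  fixes c k v s s' :: real assumes "k \<noteq> 0" "v \<noteq> 0"
  shows "((c-k) * s' * (k * v) - (c-k) * s * (k * (0-1))) / ((k * v) * (k * v)) = (c-k) * (s' * v + s) / (k * v^2)"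
  using assms by (simp add: field_simps power2_eq_square)

lemma Ft_piece2:
  fixes v s s' k :: real assumes "s + v - k \<noteq> 0"
  shows "2 * (1 / (2 * s + 2 * v - 2 * k) * (2 * s' + 2 * (0 - 1) - 0)) = 2 * (s' - 1) / (s + v - k)"
proof -
  have "2 * s + 2 * v - 2 * k = 2 * (s + v - k)" by simp
  then show ?thesis using assms by (simp add: field_simps)
qed

lemma Ft_piece0:
  fixes s d :: real assumes "s \<noteq> 0"
  shows "inverse s / 2 * (2 * d) = d / s"
  using assms by (simp add: field_simps)

lemma Ft_deriv:
  assumes k: "0 < k" "k < c/4" and u: "u < c - k - sqrt (c*k)"
  shows "DERIV (Ft c k) u :> Fd c k u"
proof -
  define s where "s = sqrt (qq c k u)"
  have sq: "0 \<le> sqrt (c*k)" using k by simp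
  have vpos: "c - u > 0" using u k sq by linarith
  have qpos: "qq c k u > 0"
  proof -
    have "u - (c - k + sqrt (c*k)) < 0" "u - (c - k - sqrt (c*k)) < 0" using u sq by linarith+
    moreover have "qq c k u = (u - (c - k - sqrt (c*k))) * (u - (c - k + sqrt (c*k)))"
    proof -
      have "sqrt (c*k) ^ 2 = c * k" using k by simp
      then show ?thesis unfolding qq_def by algebra
    qed
    ultimately show ?thesis by (simp add: mult_neg_neg)
  qed
  have s0: "s > 0" using qpos s_def by simp
  have ss: "s^2 = (u-k)^2 - 2*(c-2*k)*(u-k) + (c-k)*(c-4*k)" using qpos s_def unfolding qq_def by simp
  have Lpos: "s + (c - u) - k > 0" using u s0 sq by linarith
  have dq: "DERIV (qq c k) u :> 2 * (u - k - (c - 2*k))"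
    unfolding qq_def[abs_def] by (auto intro!: derivative_eq_intros simp: algebra_simps)
  have ds0: "DERIV (\<lambda>x. sqrt (qq c k x)) u :> inverse (sqrt (qq c k u)) / 2 * (2 * (u - k - (c - 2*k)))"
    by (rule DERIV_chain2[OF _ dq]) (rule DERIV_real_sqrt[OF qpos])
  have ds: "DERIV (\<lambda>x. sqrt (qq c k x)) u :> (u - k - (c - 2*k)) / s"
    using ds0 unfolding s_def[symmetric] Ft_piece0[OF s0[THEN less_imp_neq, symmetric]] .
  let ?s' = "(u - k - (c - 2*k)) / s"
  have t1: "DERIV (\<lambda>x. (c-k) * sqrt (qq c k x) / (k * (c - x))) u
      :> ((c-k) * ?s' * (k * (c - u)) - (c-k) * sqrt (qq c k u) * (k * (0 - 1))) / ((k * (c - u)) * (k * (c - u)))"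
    by (rule DERIV_divide[OF DERIV_cmult[OF ds] DERIV_cmult[OF DERIV_diff[OF DERIV_const DERIV_ident]]])
       (use k vpos in simp)
  have argpos: "2 * sqrt (qq c k u) + 2 * (c - u) - 2 * k > 0" using Lpos s_def by simp
  have din: "DERIV (\<lambda>x. 2 * sqrt (qq c k x) + 2 * (c - x) - 2 * k) u :> 2 * ?s' + 2 * (0 - 1) - 0"
    by (rule DERIV_diff[OF DERIV_add[OF DERIV_cmult[OF ds] DERIV_cmult[OF DERIV_diff[OF DERIV_const DERIV_ident]]] DERIV_const])
  have t2: "DERIV (\<lambda>x. 2 * ln (2 * sqrt (qq c k x) + 2 * (c - x) - 2 * k)) u
      :> 2 * (1 / (2 * sqrt (qq c k u) + 2 * (c - u) - 2 * k) * (2 * ?s' + 2 * (0 - 1) - 0))"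
    by (rule DERIV_cmult[OF DERIV_chain2[OF DERIV_ln_divide[OF argpos] din]])
  have D: "DERIV (Ft c k) u :> ((c-k) * ?s' * (k * (c - u)) - (c-k) * s * (k * (0 - 1))) / ((k * (c - u)) * (k * (c - u)))
       - 2 * (1 / (2 * s + 2 * (c - u) - 2 * k) * (2 * ?s' + 2 * (0 - 1) - 0))"
    using DERIV_diff[OF t1 t2] unfolding Ft_def[abs_def] s_def[symmetric] .
  have e1: "((c-k) * ?s' * (k * (c - u)) - (c-k) * s * (k * (0 - 1))) / ((k * (c - u)) * (k * (c - u)))
      = (c-k) * (?s' * (c - u) + s) / (k * (c - u)^2)"
    by (rule Ft_piece1) (use k vpos in auto)
  have e2: "2 * (1 / (2 * s + 2 * (c - u) - 2 * k) * (2 * ?s' + 2 * (0 - 1) - 0)) = 2 * (?s' - 1) / (s + (c - u) - k)"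
    by (rule Ft_piece2) (use Lpos in auto)
  have e3: "(c-k) * (?s' * (c - u) + s) / (k * (c - u)^2) - 2 * (?s' - 1) / (s + (c - u) - k) = Fd c k u"
    unfolding Fd_def s_def[symmetric]
    by (rule Ft_alg[OF s0[THEN less_imp_neq, symmetric] ss]) (use k vpos Lpos in auto)
  show ?thesis using D unfolding e1 e2 e3 .
qed


definition fQ :: "real \<Rightarrow> real \<Rightarrow> real \<Rightarrow> real" where
  "fQ c k u = 3 * ((c - k) / (c - u)) - ((c - k) / (c - u)) ^ 3 - 2"

lemma fQ_alt: assumes "u \<noteq> c" shows "fQ c k u = - (((u-k)/(c-u))^2) * ((c-k)/(c-u) + 2)"
proof -
  define y where "y = (c-k)/(c-u)"
  have "y - 1 = (u-k)/(c-u)" unfolding y_def using assms by (simp add: field_simps)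
  moreover have "3 * y - y^3 - 2 = - ((y - 1)^2) * (y + 2)" by algebra
  ultimately show ?thesis unfolding fQ_def y_def[symmetric] by simp
qed

lemma fQ_nonpos: assumes "u < c" "k < c" shows "fQ c k u \<le> 0"
proof -
  have "(c-k)/(c-u) + 2 > 0" using assms by (simp add: add_pos_pos)
  then show ?thesis unfolding fQ_alt[OF less_imp_neq[OF assms(1)]] by (simp add: mult_nonneg_nonneg)
qed

lemma Ft_cont:
  assumes k: "0 < k" "k < c/4" and u: "u \<le> c - k - sqrt (c*k)"
  shows "isCont (Ft c k) u"
proof -
  have sq: "0 < sqrt (c*k)" using k by simp
  have v: "c - u > 0" using u k sq by linarith
  have "2 * sqrt (qq c k u) + 2 * (c - u) - 2 * k > 0"
  proof -
    have "0 \<le> sqrt (qq c k u)"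
    proof -
      have "u - (c - k + sqrt (c*k)) \<le> 0" "u - (c - k - sqrt (c*k)) \<le> 0" using u sq by linarith+
      then have "0 \<le> (u - (c - k - sqrt (c*k))) * (u - (c - k + sqrt (c*k)))"
        by (simp add: mult_nonpos_nonpos)
      moreover have "qq c k u = (u - (c - k - sqrt (c*k))) * (u - (c - k + sqrt (c*k)))"
      proof -
        have "sqrt (c*k) ^ 2 = c * k" using k by simp
        then show ?thesis unfolding qq_def by algebra
      qed
      ultimately show ?thesis by simp
    qed
    then show ?thesis using u sq by (smt (verit))
  qed
  then show ?thesis unfolding Ft_def[abs_def] qq_def using k v
    by (intro continuous_intros) auto
qed

locale prof =
  fixes c k :: real and phi :: "real \<Rightarrow> real"
  assumes c: "c > 0" and k0: "0 < k" and kc: "k < c/4" and sp: "solitary_profile c k phi"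
begin

definition "d1 = deriv phi"
definition "d2 = deriv d1"
definition "d3 = deriv d2"

lemma sm: "smooth_real phi" and ode: "tw_ode c phi" and crest: "deriv phi 0 = 0"
  and ltop: "(phi \<longlongrightarrow> k) at_top" and lbot: "(phi \<longlongrightarrow> k) at_bot"
  and bnd: "\<And>x. 0 < phi x" "\<And>x. phi x < c" and ncst: "\<not> (\<forall>x. phi x = k)"
  using sp unfolding solitary_profile_def by auto

lemma D0: "DERIV phi x :> d1 x"
proof -
  have "((deriv ^^ 0) phi) differentiable (at x)" using sm unfolding smooth_real_def by blast
  then show ?thesis unfolding d1_def using DERIV_deriv_iff_real_differentiable by simp
qed

lemma D1: "DERIV d1 x :> d2 x"
proof -
  have "((deriv ^^ 1) phi) differentiable (at x)" using sm unfolding smooth_real_def by blast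
  then show ?thesis unfolding d2_def d1_def using DERIV_deriv_iff_real_differentiable by simp
qed

lemma D2: "DERIV d2 x :> d3 x"
proof -
  have "((deriv ^^ 2) phi) differentiable (at x)" using sm unfolding smooth_real_def by blast
  then show ?thesis unfolding d3_def d2_def d1_def using DERIV_deriv_iff_real_differentiable
    by (simp add: numeral_2_eq_2)
qed

lemma odex: "- c * d1 x + c * d3 x + 4 * phi x * d1 x = 3 * d1 x * d2 x + phi x * d3 x"
  using ode unfolding tw_ode_def d1_def d2_def d3_def by (simp add: numeral_2_eq_2 numeral_3_eq_3)

lemma cont_phi: "isCont phi x" using D0 DERIV_isCont by blast
lemma cont_d1: "isCont d1 x" using D1 DERIV_isCont by blast
lemma cont_d2: "isCont d2 x" using D2 DERIV_isCont by blast

definition "A = (c - phi 0) * d2 0 - (d1 0)^2 - c * phi 0 + 2 * (phi 0)^2"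

lemma E1: "(c - phi x) * d2 x - (d1 x)^2 - c * phi x + 2 * (phi x)^2 = A"
proof -
  let ?E = "\<lambda>x. (c - phi x) * d2 x - (d1 x)^2 - c * phi x + 2 * (phi x)^2"
  have "DERIV ?E y :> 0" for y
  proof -
    have "DERIV ?E y :> (0 - d1 y) * d2 y + (c - phi y) * d3 y - 2 * d1 y * d2 y - c * d1 y + 2 * (2 * phi y * d1 y)"
      by (auto intro!: derivative_eq_intros D0 D1 D2 simp: power2_eq_square)
    moreover have "(0 - d1 y) * d2 y + (c - phi y) * d3 y - 2 * d1 y * d2 y - c * d1 y + 2 * (2 * phi y * d1 y) = 0"
      using odex[of y] by (simp add: algebra_simps)
    ultimately show ?thesis by simp
  qed
  then have "?E x = ?E 0" by (intro DERIV_isconst_all) auto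
  then show ?thesis unfolding A_def by simp
qed

definition PA :: "real \<Rightarrow> real" where
  "PA u = c^2 * u^2 - 2*c*u^3 + u^4 + 2*c*A*u - A*u^2"

definition "B = (c - phi 0)^2 * (d1 0)^2 - PA (phi 0)"

lemma E2: "(c - phi x)^2 * (d1 x)^2 - PA (phi x) = B"
proof -
  let ?E = "\<lambda>x. (c - phi x)^2 * (d1 x)^2 - PA (phi x)"
  have "DERIV ?E y :> 0" for y
  proof -
    have "DERIV ?E y :> 2 * (c - phi y) * (0 - d1 y) * (d1 y)^2 + (c - phi y)^2 * (2 * d1 y * d2 y)
        - (c^2 * (2 * phi y * d1 y) - 2*c*(3 * (phi y)^2 * d1 y) + 4 * (phi y)^3 * d1 y + 2*c*A*d1 y - A * (2 * phi y * d1 y))"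
      unfolding PA_def
      by (auto intro!: derivative_eq_intros D0 D1 simp: power2_eq_square power3_eq_cube)
    moreover have "2 * (c - phi y) * (0 - d1 y) * (d1 y)^2 + (c - phi y)^2 * (2 * d1 y * d2 y)
        - (c^2 * (2 * phi y * d1 y) - 2*c*(3 * (phi y)^2 * d1 y) + 4 * (phi y)^3 * d1 y + 2*c*A*d1 y - A * (2 * phi y * d1 y)) = 0"
    proof -
      have "(c - phi y) * d2 y = A + (d1 y)^2 + c * phi y - 2 * (phi y)^2" using E1[of y] by simp
      then show ?thesis by algebra
    qed
    ultimately show ?thesis by simp
  qed
  then have "?E x = ?E 0" by (intro DERIV_isconst_all) auto
  then show ?thesis unfolding B_def by simp
qed

lemma cphi: "c - phi x > 0" using bnd(2)[of x] by simp

lemma d1sq: "(d1 x)^2 = (PA (phi x) + B) / (c - phi x)^2"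
  using E2[of x] cphi[of x] by (simp add: field_simps)

lemma lim_d1sq: "((\<lambda>x. (d1 x)^2) \<longlongrightarrow> (PA k + B) / (c - k)^2) at_top"
proof -
  have "((\<lambda>x. (PA (phi x) + B) / (c - phi x)^2) \<longlongrightarrow> (PA k + B) / (c - k)^2) at_top"
    unfolding PA_def using kc c by (intro tendsto_intros ltop) auto
  then show ?thesis using d1sq by simp
qed

lemma PAB: "PA k + B = 0" and lim_d1: "(d1 \<longlongrightarrow> 0) at_top"
proof -
  have "((\<lambda>x. \<bar>d1 x\<bar>) \<longlongrightarrow> sqrt ((PA k + B) / (c - k)^2)) at_top"
    using tendsto_real_sqrt[OF lim_d1sq] by simp
  then have s0: "sqrt ((PA k + B) / (c - k)^2) = 0" by (rule lim_deriv_zero[OF ltop D0])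
  then show "PA k + B = 0" using kc c by simp
  show "(d1 \<longlongrightarrow> 0) at_top"
    using tendsto_real_sqrt[OF lim_d1sq] s0 by (simp add: tendsto_rabs_zero_iff)
qed

lemma d2eq: "d2 x = (A + (d1 x)^2 + c * phi x - 2 * (phi x)^2) / (c - phi x)"
  using E1[of x] cphi[of x] by (simp add: field_simps)

lemma A_val: "A = 2 * k^2 - c * k"
proof -
  have "(d2 \<longlongrightarrow> (A + 0^2 + c * k - 2 * k^2) / (c - k)) at_top"
    unfolding d2eq[abs_def] using kc c by (intro tendsto_intros ltop lim_d1) auto
  then have "((\<lambda>x. \<bar>d2 x\<bar>) \<longlongrightarrow> \<bar>(A + 0^2 + c * k - 2 * k^2) / (c - k)\<bar>) at_top"
    by (rule tendsto_rabs)
  then have "\<bar>(A + 0^2 + c * k - 2 * k^2) / (c - k)\<bar> = 0" by (rule lim_deriv_zero[OF lim_d1 D1])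
  then show ?thesis using kc c by simp
qed

lemma KR: "(c - phi x)^2 * (d1 x)^2 = (phi x - k)^2 * qq c k (phi x)"
proof -
  have "(c - phi x)^2 * (d1 x)^2 = PA (phi x) - PA k" using E2[of x] PAB by simp
  also have "\<dots> = (phi x - k)^2 * qq c k (phi x)"
    unfolding PA_def qq_def A_val by algebra
  finally show ?thesis .
qed

lemma ge_k: "phi x \<ge> k"
proof (rule ccontr)
  assume "\<not> phi x \<ge> k"
  then have "phi x < k" by simp
  then obtain m where m: "\<And>y. phi m \<le> phi y"
    using attains_min_lim[OF cont_phi ltop lbot] by blast
  have "d1 m = 0" by (rule DERIV_local_min[OF D0 zero_less_one]) (use m in auto)
  then have "(phi m - k)^2 * qq c k (phi m) = 0" using KR[of m] by simp
  moreover have "phi m < k" using m[of x] \<open>phi x < k\<close> by simp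
  moreover have "qq c k (phi m) > 0" using qq_pos_le_k[OF k0 kc] calculation(2) by simp
  ultimately show False by simp
qed

lemma ex_gt: "\<exists>x. phi x > k"
  using ncst ge_k by (metis order_less_le)

definition "M = (SOME M. \<forall>x. phi x \<le> phi M)"

definition "um = c - k - sqrt (c*k)"

lemma M_max: "phi x \<le> phi M"
proof -
  obtain x0 where "phi x0 > k" using ex_gt by blast
  then have "\<exists>M. \<forall>x. phi x \<le> phi M" using attains_max_lim[OF cont_phi ltop lbot] by blast
  then have "\<forall>x. phi x \<le> phi (SOME M. \<forall>x. phi x \<le> phi M)" by (rule someI_ex)
  then show ?thesis unfolding M_def by blast
qed

lemma phiM_gt: "phi M > k"
  using ex_gt M_max by (meson less_le_trans)

lemma d1_zero_imp: assumes "d1 x = 0" "phi x > k" shows "phi x = um"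
proof -
  have "(phi x - k)^2 * qq c k (phi x) = 0" using KR[of x] assms by simp
  then have "qq c k (phi x) = 0" using assms by simp
  then show ?thesis unfolding um_def using qq_zero[OF k0 kc bnd(2)] by blast
qed

lemma d1M: "d1 M = 0" by (rule DERIV_local_max[OF D0 zero_less_one]) (use M_max in auto)

lemma phiM: "phi M = um" using d1_zero_imp[OF d1M phiM_gt] .

lemma le_um: "phi x \<le> um" using M_max phiM by simp

lemma um_gt: "um > k" unfolding um_def using um_gt_k[OF k0 kc] .

lemma c_um: "c - um = k + sqrt (c*k)" unfolding um_def by simp

lemma d1_bound: "(d1 x)^2 \<le> ((c-k)*(c-4*k)/k^2) * (phi x - k)^2"
proof -
  have q: "qq c k (phi x) \<le> (c-k)*(c-4*k)"
  proof -
    have h1: "0 \<le> phi x - k" using ge_k[of x] by linarith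
    have h2: "phi x - k \<le> 2*(c-2*k)"
    proof -
      have "c - 2*k > 0" using kc k0 by simp
      moreover have "phi x \<le> c - k - sqrt (c*k)" using le_um[of x] unfolding um_def .
      moreover have "0 \<le> sqrt (c*k)" using sq_nn[OF k0 kc] .
      ultimately show ?thesis by (smt (verit))
    qed
    note h1 h2
    then have "(phi x - k) * (phi x - k - 2*(c-2*k)) \<le> 0" by (intro mult_nonneg_nonpos) auto
    then show ?thesis unfolding qq_def by (simp add: power2_eq_square algebra_simps)
  qed
  have cp: "c - phi x \<ge> k" using le_um[of x] c_um sq_nn[OF k0 kc] by linarith
  have "(c - phi x)^2 * (d1 x)^2 \<le> (c-k)*(c-4*k) * (phi x - k)^2"
    unfolding KR using mult_right_mono[OF q, of "(phi x - k)^2"] by (simp add: mult.commute)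
  moreover have "k^2 * (d1 x)^2 \<le> (c - phi x)^2 * (d1 x)^2"
    using cp k0 by (intro mult_right_mono power_mono) auto
  ultimately have "k^2 * (d1 x)^2 \<le> (c-k)*(c-4*k) * (phi x - k)^2" by linarith
  then show ?thesis using k0 by (simp add: field_simps)
qed

lemma gt_k: "phi x > k"
proof (rule ccontr)
  assume "\<not> phi x > k"
  then have x1: "phi x = k" using ge_k[of x] by simp
  define K where "K = 1 + (c-k)*(c-4*k)/k^2"
  define psi where "psi = (\<lambda>y. (phi y - k)^2)"
  have dpsi: "DERIV psi y :> 2 * (phi y - k) * d1 y" for y
    unfolding psi_def by (auto intro!: derivative_eq_intros D0)
  have bnd': "\<bar>2 * (phi y - k) * d1 y\<bar> \<le> K * psi y" for y
  proof -
    have "\<bar>2 * (phi y - k) * d1 y\<bar> = 2 * \<bar>phi y - k\<bar> * \<bar>d1 y\<bar>"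
      by (simp only: abs_mult abs_numeral)
    also have "\<dots> \<le> (phi y - k)^2 + (d1 y)^2"
      using sum_squares_bound[of "\<bar>phi y - k\<bar>" "\<bar>d1 y\<bar>"]
      by (simp only: power2_abs)
    also have "\<dots> \<le> (phi y - k)^2 + ((c-k)*(c-4*k)/k^2) * (phi y - k)^2"
      using d1_bound[of y] by simp
    finally show ?thesis unfolding K_def psi_def by (simp add: algebra_simps)
  qed
  have z: "phi y = k" for y
  proof (cases "x \<le> y")
    case True
    let ?g = "\<lambda>y. psi y * exp (- K * y)"
    have "?g y \<le> ?g x"
    proof (rule DERIV_nonpos_imp_nonincreasing[OF True])
      fix t assume "x \<le> t" "t \<le> y"
      have "DERIV ?g t :> 2 * (phi t - k) * d1 t * exp (- K * t) + psi t * (exp (- K * t) * (- K))"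
        by (auto intro!: derivative_eq_intros dpsi)
      moreover have "2 * (phi t - k) * d1 t * exp (- K * t) + psi t * (exp (- K * t) * (- K)) \<le> 0"
      proof -
        have "2 * (phi t - k) * d1 t \<le> K * psi t" using bnd'[of t] by linarith
        then have "2 * (phi t - k) * d1 t * exp (- K * t) \<le> K * psi t * exp (- K * t)"
          by (intro mult_right_mono) auto
        then show ?thesis by (simp add: algebra_simps)
      qed
      ultimately show "\<exists>y. DERIV ?g t :> y \<and> y \<le> 0" by blast
    qed
    then have "psi y * exp (- K * y) \<le> 0" using x1 unfolding psi_def by simp
    then have "psi y \<le> 0" by (simp add: mult_le_0_iff)
    then show ?thesis unfolding psi_def by simp
  next
    case False
    then have yx: "y \<le> x" by simp
    let ?h = "\<lambda>y. psi y * exp (K * y)"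
    have "?h y \<le> ?h x"
    proof (rule DERIV_nonneg_imp_nondecreasing[OF yx])
      fix t assume "y \<le> t" "t \<le> x"
      have "DERIV ?h t :> 2 * (phi t - k) * d1 t * exp (K * t) + psi t * (exp (K * t) * K)"
        by (auto intro!: derivative_eq_intros dpsi)
      moreover have "2 * (phi t - k) * d1 t * exp (K * t) + psi t * (exp (K * t) * K) \<ge> 0"
      proof -
        have "- (K * psi t) \<le> 2 * (phi t - k) * d1 t" using bnd'[of t] by linarith
        then have "- (K * psi t) * exp (K * t) \<le> 2 * (phi t - k) * d1 t * exp (K * t)"
          by (intro mult_right_mono) auto
        then show ?thesis by (simp add: algebra_simps)
      qed
      ultimately show "\<exists>z. DERIV ?h t :> z \<and> z \<ge> 0" by blast
    qed
    then have "psi y * exp (K * y) \<le> 0" using x1 unfolding psi_def by simp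
    then have "psi y \<le> 0" by (simp add: mult_le_0_iff)
    then show ?thesis unfolding psi_def by simp
  qed
  then show False using ncst by blast
qed

lemma d1_zero: "d1 x = 0 \<Longrightarrow> phi x = um" using d1_zero_imp gt_k by blast

lemma d2_at_um: assumes "phi x = um" "d1 x = 0" shows "d2 x < 0"
proof -
  have num: "A + (d1 x)^2 + c * phi x - 2 * (phi x)^2 = (um - k) * (c - 2*um - 2*k)"
    using assms unfolding A_val by (simp add: algebra_simps power2_eq_square)
  have s: "sqrt (c*k) < c/2"
  proof -
    have "c*k < (c/2)^2" using kc c by (simp add: power2_eq_square field_simps)
    then have "sqrt (c*k) < sqrt ((c/2)^2)" by (rule real_sqrt_less_mono)
    then show ?thesis using c by simp
  qed
  have "c - 2*um - 2*k < 0" unfolding um_def using s by simp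
  then have "(um - k) * (c - 2*um - 2*k) < 0" using um_gt by (simp add: mult_pos_neg)
  then show ?thesis unfolding d2eq[of x] num using cphi[of x] by (simp add: divide_neg_pos)
qed

lemma right_half: "x > M \<Longrightarrow> d1 x < 0 \<and> phi x < um"
  by (rule halfmono[OF D0 D1 le_um phiM d1_zero d2_at_um[OF phiM d1M] d1M])

lemma left_half: assumes "x < M" shows "d1 x > 0 \<and> phi x < um"
proof -
  have R0: "DERIV (\<lambda>x. phi (- x)) x :> - d1 (- x)" for x
    using DERIV_chain2[OF D0 DERIV_minus[OF DERIV_ident]] by simp
  have R1: "DERIV (\<lambda>x. - d1 (- x)) x :> d2 (- x)" for x
    using DERIV_minus[OF DERIV_chain2[OF D1 DERIV_minus[OF DERIV_ident]]] by simp
  have "- d1 (- (- x)) < 0 \<and> phi (- (- x)) < um"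
  proof (rule halfmono[OF R0 R1, of um "- M"])
    show "\<And>x. phi (- x) \<le> um" using le_um by blast
    show "phi (- (- M)) = um" using phiM by simp
    show "\<And>x. - d1 (- x) = 0 \<Longrightarrow> phi (- x) = um" using d1_zero by simp
    show "d2 (- (- M)) < 0" using d2_at_um[OF phiM d1M] by simp
    show "- d1 (- (- M)) = 0" using d1M by simp
    show "- M < - x" using assms by simp
  qed
  then show ?thesis by simp
qed

lemma S_id: assumes "x \<noteq> M"
  shows "\<bar>d1 x\<bar> * (c - phi x) = (phi x - k) * sqrt (qq c k (phi x))"
proof -
  have lt: "phi x < um" using right_half[of x] left_half[of x] assms by (cases "x < M") auto
  then have qp: "qq c k (phi x) > 0" using qq_pos[OF k0 kc] unfolding um_def by simp
  have "(\<bar>d1 x\<bar> * (c - phi x))^2 = ((phi x - k) * sqrt (qq c k (phi x)))^2"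
    using KR[of x] qp by (simp add: power_mult_distrib mult.commute)
  moreover have "\<bar>d1 x\<bar> * (c - phi x) \<ge> 0" using cphi[of x] by simp
  moreover have "(phi x - k) * sqrt (qq c k (phi x)) \<ge> 0" using gt_k[of x] qp by simp
  ultimately show ?thesis using power2_eq_imp_eq by blast
qed

lemma deriv_id:
  assumes "x \<noteq> M"
  shows "Fd c k (phi x) * d1 x = (if x > M then - fQ c k (phi x) else fQ c k (phi x))"
proof -
  define s where "s = sqrt (qq c k (phi x))"
  define v where "v = c - phi x"
  have v0: "v > 0" unfolding v_def using cphi .
  have lt: "phi x < um" using right_half[of x] left_half[of x] assms by (cases "x < M") auto
  have s0: "s > 0" using qq_pos[OF k0 kc] lt unfolding um_def s_def by simp
  have S: "\<bar>d1 x\<bar> * v = (phi x - k) * s" using S_id[OF assms] unfolding s_def v_def .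
  have d1v: "d1 x = (if x > M then - ((phi x - k) * s / v) else (phi x - k) * s / v)"
  proof (cases "x > M")
    case True
    then have "d1 x < 0" using right_half by blast
    then have "- d1 x * v = (phi x - k) * s" using S by simp
    then show ?thesis using True v0 by (simp add: field_simps)
  next
    case False
    then have "x < M" using assms by simp
    then have "d1 x > 0" using left_half by blast
    then have "d1 x * v = (phi x - k) * s" using S by simp
    then show ?thesis using False v0 by (simp add: field_simps)
  qed
  have fq: "fQ c k (phi x) = - (((phi x - k)/v)^2) * ((c-k)/v + 2)"
    unfolding v_def using fQ_alt cphi[of x] by simp
  have fd: "Fd c k (phi x) = - (phi x - k) * ((c-k)/v + 2) / (v * s)"
    unfolding Fd_def s_def v_def ..
  show ?thesis unfolding fq fd d1v using v0 s0 by (auto simp: field_simps power2_eq_square)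
qed

lemma cont_g: "isCont (\<lambda>x. - fQ c k (phi x)) x"
  unfolding fQ_def using cphi[of x] by (intro continuous_intros cont_phi) auto

lemma g_nonneg: "0 \<le> - fQ c k (phi x)"
  using fQ_nonpos[of "phi x" c k] bnd(2)[of x] kc k0 by simp

lemma Ft_phi_cont: "isCont (\<lambda>x. Ft c k (phi x)) x"
  by (rule isCont_o2[OF cont_phi Ft_cont[OF k0 kc]]) (use le_um[of x] in \<open>simp add: um_def\<close>)

lemma right_int:
  "set_integrable lborel (einterval (ereal M) \<infinity>) (\<lambda>x. - fQ c k (phi x))"
  "(LBINT x=ereal M..\<infinity>. - fQ c k (phi x)) = Ft c k k - Ft c k um"
proof -
  have der: "DERIV (\<lambda>x. Ft c k (phi x)) x :> - fQ c k (phi x)" if "ereal M < ereal x" "ereal x < \<infinity>" for x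
  proof -
    have x: "x > M" using that by simp
    have "DERIV (\<lambda>x. Ft c k (phi x)) x :> Fd c k (phi x) * d1 x"
      by (rule DERIV_chain2[OF Ft_deriv[OF k0 kc] D0]) (use right_half[OF x] in \<open>simp add: um_def\<close>)
    then show ?thesis using deriv_id[of x] x by simp
  qed
  have A: "(((\<lambda>x. Ft c k (phi x)) \<circ> real_of_ereal) \<longlongrightarrow> Ft c k um) (at_right (ereal M))"
    unfolding ereal_tendsto_simps
  proof -
    have "((\<lambda>x. Ft c k (phi x)) \<longlongrightarrow> Ft c k (phi M)) (at M)"
      using Ft_phi_cont[of M] by (simp add: isCont_def)
    then show "((\<lambda>x. Ft c k (phi x)) \<longlongrightarrow> Ft c k um) (at_right M)"
      using phiM by (auto intro: tendsto_mono[OF at_le])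
  qed
  have B: "(((\<lambda>x. Ft c k (phi x)) \<circ> real_of_ereal) \<longlongrightarrow> Ft c k k) (at_left \<infinity>)"
    unfolding ereal_tendsto_simps
    by (rule isCont_tendsto_compose[OF Ft_cont[OF k0 kc] ltop]) (use um_gt in \<open>simp add: um_def\<close>)
  show "set_integrable lborel (einterval (ereal M) \<infinity>) (\<lambda>x. - fQ c k (phi x))"
    "(LBINT x=ereal M..\<infinity>. - fQ c k (phi x)) = Ft c k k - Ft c k um"
    using interval_integral_FTC_nonneg[where F="\<lambda>x. Ft c k (phi x)" and f="\<lambda>x. - fQ c k (phi x)", OF _ der _ _ A B]
      cont_g g_nonneg by auto
qed

lemma left_int:
  "set_integrable lborel (einterval (- \<infinity>) (ereal M)) (\<lambda>x. - fQ c k (phi x))"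
  "(LBINT x=- \<infinity>..ereal M. - fQ c k (phi x)) = Ft c k k - Ft c k um"
proof -
  have der: "DERIV (\<lambda>x. - Ft c k (phi x)) x :> - fQ c k (phi x)" if "- \<infinity> < ereal x" "ereal x < ereal M" for x
  proof -
    have x: "x < M" using that by simp
    have "DERIV (\<lambda>x. Ft c k (phi x)) x :> Fd c k (phi x) * d1 x"
      by (rule DERIV_chain2[OF Ft_deriv[OF k0 kc] D0]) (use left_half[OF x] in \<open>simp add: um_def\<close>)
    then have "DERIV (\<lambda>x. - Ft c k (phi x)) x :> - (Fd c k (phi x) * d1 x)" by (rule DERIV_minus)
    then show ?thesis using deriv_id[of x] x by simp
  qed
  have B: "(((\<lambda>x. - Ft c k (phi x)) \<circ> real_of_ereal) \<longlongrightarrow> - Ft c k um) (at_left (ereal M))"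
    unfolding ereal_tendsto_simps
  proof -
    have "((\<lambda>x. - Ft c k (phi x)) \<longlongrightarrow> - Ft c k (phi M)) (at M)"
      using Ft_phi_cont[of M] by (intro tendsto_minus) (simp add: isCont_def)
    then show "((\<lambda>x. - Ft c k (phi x)) \<longlongrightarrow> - Ft c k um) (at_left M)"
      using phiM by (auto intro: tendsto_mono[OF at_le])
  qed
  have A: "(((\<lambda>x. - Ft c k (phi x)) \<circ> real_of_ereal) \<longlongrightarrow> - Ft c k k) (at_right (- \<infinity>))"
    unfolding ereal_tendsto_simps
    by (intro tendsto_minus isCont_tendsto_compose[OF Ft_cont[OF k0 kc] lbot]) (use um_gt in \<open>simp add: um_def\<close>)
  show "set_integrable lborel (einterval (- \<infinity>) (ereal M)) (\<lambda>x. - fQ c k (phi x))"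
    "(LBINT x=- \<infinity>..ereal M. - fQ c k (phi x)) = Ft c k k - Ft c k um"
    using interval_integral_FTC_nonneg[where F="\<lambda>x. - Ft c k (phi x)" and f="\<lambda>x. - fQ c k (phi x)", OF _ der _ _ A B]
      cont_g g_nonneg by auto
qed

lemma Qfun_val: "Qfun c k phi = 2 * (Ft c k um - Ft c k k)"
proof -
  define g where "g = (\<lambda>x. - fQ c k (phi x))"
  have iL: "integrable lborel (\<lambda>x. indicator {..<M} x *\<^sub>R g x)"
    using left_int(1) unfolding g_def set_integrable_def by simp
  have iR: "integrable lborel (\<lambda>x. indicator {M<..} x *\<^sub>R g x)"
    using right_int(1) unfolding g_def set_integrable_def by simp
  have vL: "(LINT x|lborel. indicator {..<M} x *\<^sub>R g x) = Ft c k k - Ft c k um"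
    using left_int(2) unfolding g_def interval_lebesgue_integral_def set_lebesgue_integral_def by simp
  have vR: "(LINT x|lborel. indicator {M<..} x *\<^sub>R g x) = Ft c k k - Ft c k um"
    using right_int(2) unfolding g_def interval_lebesgue_integral_def set_lebesgue_integral_def by simp
  have ae: "AE x in lborel. g x = indicator {..<M} x *\<^sub>R g x + indicator {M<..} x *\<^sub>R g x"
    using AE_lborel_singleton[of M]
  proof (rule eventually_mono)
    fix x :: real assume "x \<noteq> M"
    then show "g x = indicator {..<M} x *\<^sub>R g x + indicator {M<..} x *\<^sub>R g x"
      by (cases "x < M") (auto simp: indicator_def)
  qed
  have "(LINT x|lborel. g x) = (LINT x|lborel. indicator {..<M} x *\<^sub>R g x + indicator {M<..} x *\<^sub>R g x)"
  proof (rule integral_cong_AE)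
    have "continuous_on UNIV g" unfolding g_def using cont_g by (simp add: continuous_at_imp_continuous_on)
    then show "g \<in> borel_measurable lborel" using borel_measurable_continuous_onI by simp
    show "(\<lambda>x. indicator {..<M} x *\<^sub>R g x + indicator {M<..} x *\<^sub>R g x) \<in> borel_measurable lborel"
      using iL iR by auto
    show "AE x in lborel. g x = indicator {..<M} x *\<^sub>R g x + indicator {M<..} x *\<^sub>R g x" by (rule ae)
  qed
  also have "\<dots> = 2 * (Ft c k k - Ft c k um)"
    using Bochner_Integration.integral_add[OF iL iR] vL vR by simp
  finally have "(LINT x|lborel. g x) = 2 * (Ft c k k - Ft c k um)" .
  moreover have "Qfun c k phi = - (LINT x|lborel. g x)"
  proof -
    have "Qfun c k phi = (LINT x|lborel. fQ c k (phi x))" unfolding Qfun_def fQ_def ..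
    also have "\<dots> = - (LINT x|lborel. - fQ c k (phi x))" unfolding Bochner_Integration.integral_minus by simp
    finally show ?thesis unfolding g_def .
  qed
  ultimately show ?thesis by simp
qed

lemma Qfun_Qc: "Qfun c k phi = Qc c k"
proof -
  define r where "r = sqrt ((c-k)*(c-4*k))"
  define q where "q = sqrt (c*k)"
  have q0: "q > 0" unfolding q_def using c k0 by simp
  have pos: "(c-k)*(c-4*k) > 0" using c k0 kc by (intro mult_pos_pos) auto
  have r0: "r > 0" unfolding r_def using pos by simp
  have w: "r + c - 2*k > 0" using r0 k0 kc by simp
  have qum: "qq c k um = 0" using qq_fact[OF c k0, of um] unfolding um_def by simp
  have Fum: "Ft c k um = - 2 * ln (2 * q)"
    unfolding Ft_def qum using c_um unfolding q_def by simp
  have qk: "qq c k k = (c-k)*(c-4*k)" unfolding qq_def by simp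
  have Fk: "Ft c k k = r / k - 2 * ln (2 * (r + c - 2*k))"
  proof -
    have "(c-k) * r / (k * (c-k)) = r / k" using kc k0 by simp
    moreover have "2 * r + 2 * (c - k) - 2 * k = 2 * (r + c - 2*k)" by simp
    ultimately show ?thesis unfolding Ft_def qk r_def[symmetric] by simp
  qed
  have l1: "ln (2 * q) = ln 2 + (ln c + ln k) / 2"
  proof -
    have "ln (2 * q) = ln 2 + ln q" using q0 by (simp add: ln_mult)
    moreover have "ln q = ln (c*k) / 2" unfolding q_def using c k0 by (simp add: ln_sqrt)
    moreover have "ln (c*k) = ln c + ln k" using c k0 by (simp add: ln_mult)
    ultimately show ?thesis by simp
  qed
  have l2: "ln (2 * (r + c - 2*k)) = ln 2 + ln (r + c - 2*k)" using w ln_mult[of 2 "r + c - 2*k"] by simp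
  have "Qfun c k phi = 2 * (Ft c k um - Ft c k k)" by (rule Qfun_val)
  also have "\<dots> = 4 * ln (r + c - 2*k) - 2 * ln c - 2 * ln k - 2 * (r / k)"
  proof -
    have e: "2 * ((- 2 * (ln 2 + (ln c + ln k) / 2)) - (r / k - 2 * (ln 2 + ln (r + c - 2*k))))
           = 4 * ln (r + c - 2*k) - 2 * ln c - 2 * ln k - 2 * (r / k)"
      by (simp add: field_simps)
    show ?thesis unfolding Fum Fk l1 l2 by (rule e)
  qed
  also have "\<dots> = Qc c k" unfolding Qc_def r_def ..
  finally show ?thesis .
qed


end


theorem lemma5p2:
  fixes c k1 k2 :: real and phi1 phi2 :: "real \<Rightarrow> real"
  assumes "c > 0"
    and "0 < k1" and "k1 < k2" and "k2 < c / 4"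
    and "solitary_profile c k1 phi1" and "solitary_profile c k2 phi2"
  shows "Qfun c k1 phi1 < Qfun c k2 phi2"
proof -
  interpret p1: prof c k1 phi1 by unfold_locales (use assms in auto)
  interpret p2: prof c k2 phi2 by unfold_locales (use assms in auto)
  have "Qfun c k1 phi1 = Qc c k1" by (rule p1.Qfun_Qc)
  also have "\<dots> < Qc c k2" by (rule Qc_mono) (use assms in auto)
  also have "\<dots> = Qfun c k2 phi2" by (rule p2.Qfun_Qc[symmetric])
  finally show ?thesis .
qed

end
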